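(* Let $m\ge1$, $M=2^m$, $N\ge1$, and let bit probabilities $P_{C_0}(0),\ldots,P_{C_{m-1}}(0)\in(0,1)$ be given, with $P_{C_k}(1)=1-P_{C_k}(0)$. Let $\mathbb{X}$ be a matrix with rows $\boldsymbol{x}_0,\ldots,\boldsymbol{x}_{M-1}\in\mathbb{R}^N$ and let $\mathring{\mathbb{X}}$ be its transform, with rows $\mathring{\boldsymbol{x}}_i=\sum_{j=0}^{M-1}\boldsymbol{x}_j\gamma_{i,j}\sqrt{P_j}$. Then for every $j=0,\ldots,M-1$, $$\boldsymbol{x}_j=\frac{1}{M\sqrt{P_j}}\sum_{i=0}^{M-1}\mathring{\boldsymbol{x}}_i\gamma_{i,j}.$$
   Context: For an integer $0\le i\le M-1$, $n_{i,k}\in\{0,1\}$ denotes the $k$-th bit of its base-2 representation ($i=\sum_k n_{i,k}2^k$); $\bar b=1-b$ for a bit $b$. The symbol probabilities are $P_i=\prod_{k=0}^{m-1}P_{C_k}(n_{i,k})$. The coefficients are $$\gamma_{i,j}=\prod_{k=0}^{m-1}\Big[(-1)^{\bar n_{i,k}n_{j,k}}\sqrt{P_{C_k}(0)}+(-1)^{n_{i,k}\bar n_{j,k}}\sqrt{P_{C_k}(1)}\Big].$$ *)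

theory Defs
  imports "HOL-Analysis.Analysis"
begin

definition nbit :: "nat \<Rightarrow> nat \<Rightarrow> nat" where
  "nbit i k = (i div 2 ^ k) mod 2"

definition PC :: "(nat \<Rightarrow> real) \<Rightarrow> nat \<Rightarrow> nat \<Rightarrow> real" where
  "PC p0 k b = (if b = 0 then p0 k else 1 - p0 k)"

definition Psym :: "nat \<Rightarrow> (nat \<Rightarrow> real) \<Rightarrow> nat \<Rightarrow> real" where
  "Psym m p0 i = (\<Prod>k<m. PC p0 k (nbit i k))"

definition gamma :: "nat \<Rightarrow> (nat \<Rightarrow> real) \<Rightarrow> nat \<Rightarrow> nat \<Rightarrow> real" where
  "gamma m p0 i j = (\<Prod>k<m.
      (-1) ^ ((1 - nbit i k) * nbit j k) * sqrt (PC p0 k 0)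
    + (-1) ^ (nbit i k * (1 - nbit j k)) * sqrt (PC p0 k 1))"

definition xring :: "nat \<Rightarrow> (nat \<Rightarrow> real) \<Rightarrow> (nat \<Rightarrow> real ^ 'n) \<Rightarrow> nat \<Rightarrow> real ^ 'n" where
  "xring m p0 x i = (\<Sum>j<2 ^ m. (gamma m p0 i j * sqrt (Psym m p0 j)) *\<^sub>R x j)"

end

theory Submission imports Defs begin

lemma nbit_01: "nbit i k = 0 \<or> nbit i k = 1"
  unfolding nbit_def by auto

lemma nbit_shift: assumes "i < 2^m" "k < m" shows "nbit (i + 2^m) k = nbit i k"
proof -
  have e: "(2::nat)^m = 2^(m-k) * 2^k" using assms(2) by (simp flip: power_add)
  have "(i + 2^m) div 2^k = i div 2^k + 2^(m-k)" unfolding e by simp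
  moreover obtain d where "m - k = Suc d" using assms(2) by (metis Suc_diff_Suc)
  then have "(2::nat)^(m-k) = 2*2^d" by simp
  ultimately show ?thesis unfolding nbit_def by simp
qed

lemma nbit_top: assumes "i < 2^m" shows "nbit (i + 2^m) m = 1"
proof -
  have "(i + 2^m) div 2^m = 1" using assms by (simp add: div_add_self2 div_less)
  then show ?thesis unfolding nbit_def by simp
qed

lemma nbit_low: assumes "i < 2^m" shows "nbit i m = 0"
  using assms unfolding nbit_def by (simp add: div_less)

lemma sum_prod_bits:
  fixes f :: "nat \<Rightarrow> nat \<Rightarrow> real"
  shows "(\<Sum>i<2^m. \<Prod>k<m. f k (nbit i k)) = (\<Prod>k<m. f k 0 + f k 1)"
proof (induction m)
  case 0 then show ?case by simp
next
  case (Suc m)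
  have split: "(\<Sum>i<2^Suc m. g i) = (\<Sum>i<2^m. g i) + (\<Sum>i<2^m. g (i + 2^m))" for g :: "nat \<Rightarrow> real"
  proof -
    have "(\<Sum>i<2^Suc m. g i) = (\<Sum>i\<in>{0..<2^m}. g i) + (\<Sum>i\<in>{2^m..<2^m+2^m}. g i)"
      by (simp add: lessThan_atLeast0 sum.atLeastLessThan_concat mult_2)
    also have "(\<Sum>i\<in>{2^m..<2^m+2^m}. g i) = (\<Sum>i\<in>{0..<2^m}. g (i + 2^m))"
      using sum.shift_bounds_nat_ivl[of g 0 "2^m" "2^m"] by simp
    finally show ?thesis by (simp add: lessThan_atLeast0)
  qed
  have A: "(\<Prod>k<Suc m. f k (nbit i k)) = (\<Prod>k<m. f k (nbit i k)) * f m 0" if "i < 2^m" for i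
    using that by (simp add: nbit_low)
  have B: "(\<Prod>k<Suc m. f k (nbit (i+2^m) k)) = (\<Prod>k<m. f k (nbit i k)) * f m 1" if "i < 2^m" for i
    using that by (simp add: nbit_top nbit_shift)
  have "(\<Sum>i<2^Suc m. \<Prod>k<Suc m. f k (nbit i k))
     = (\<Sum>i<2^m. (\<Prod>k<m. f k (nbit i k)) * f m 0) + (\<Sum>i<2^m. (\<Prod>k<m. f k (nbit i k)) * f m 1)"
  proof -
    have s0: "(\<Sum>i<2^m. \<Prod>k<Suc m. f k (nbit i k)) = (\<Sum>i<2^m. (\<Prod>k<m. f k (nbit i k)) * f m 0)"
      by (rule sum.cong[OF refl]) (rule A, simp)
    have s1: "(\<Sum>i<2^m. \<Prod>k<Suc m. f k (nbit (i+2^m) k)) = (\<Sum>i<2^m. (\<Prod>k<m. f k (nbit i k)) * f m 1)"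
      by (rule sum.cong[OF refl]) (rule B, simp)
    show ?thesis unfolding split s0 s1 ..
  qed
  also have "\<dots> = (\<Prod>k<Suc m. f k 0 + f k 1)"
    by (simp only: sum_distrib_right[symmetric] Suc.IH prod.lessThan_Suc distrib_left)
  finally show ?case .
qed

lemma nbit_inj: assumes "j < 2^m" "j' < 2^m" "\<forall>k<m. nbit j k = nbit j' k" shows "j = j'"
proof -
  have "bit j k = bit j' k" for k
  proof (cases "k < m")
    case True
    have "j div 2^k mod 2 = j' div 2^k mod 2" using assms(3) True unfolding nbit_def by simp
    then show ?thesis unfolding bit_nat_def by (simp add: even_iff_mod_2_eq_zero)
  next
    case False
    then have "(2::nat)^m \<le> 2^k" by simp
    then have "j < 2^k" "j' < 2^k" using assms(1,2) by linarith+
    then have "j div 2^k = 0" "j' div 2^k = 0" by (simp_all add: div_less)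
    then show ?thesis by (simp add: bit_nat_def)
  qed
  then show ?thesis by (simp add: bit_eq_iff)
qed

lemma bit_orth:
  fixes p :: real
  assumes p: "0 < p" "p < 1" and c: "c = 0 \<or> c = 1" and d: "d = 0 \<or> d = 1"
  defines "g \<equiv> \<lambda>b c::nat. (-1::real) ^ ((1 - b) * c) * sqrt p + (-1) ^ (b * (1 - c)) * sqrt (1 - p)"
  shows "g 0 c * g 0 d + g 1 c * g 1 d = (if c = d then 2 else 0)"
proof -
  have s1: "sqrt p * sqrt p = p" "sqrt (1-p) * sqrt (1-p) = 1 - p" using p by auto
  show ?thesis using c d unfolding g_def
    using p by (auto simp: algebra_simps s1)
qed

lemma orth:
  assumes p: "\<And>k. k < m \<Longrightarrow> 0 < p0 k \<and> p0 k < 1" and j: "j < 2^m" "j' < 2^m"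
  shows "(\<Sum>i<2^m. gamma m p0 i j * gamma m p0 i j') = (if j = j' then 2^m else 0)"
proof -
  define g where "g \<equiv> \<lambda>k b c::nat. (-1::real) ^ ((1 - b) * c) * sqrt (p0 k) + (-1) ^ (b * (1 - c)) * sqrt (1 - p0 k)"
  have G: "gamma m p0 i j = (\<Prod>k<m. g k (nbit i k) (nbit j k))" for i j
    unfolding gamma_def g_def PC_def by simp
  have "(\<Sum>i<2^m. gamma m p0 i j * gamma m p0 i j') =
      (\<Sum>i<2^m. \<Prod>k<m. (\<lambda>k b. g k b (nbit j k) * g k b (nbit j' k)) k (nbit i k))"
    unfolding G by (simp add: prod.distrib)
  also have "\<dots> = (\<Prod>k<m. g k 0 (nbit j k) * g k 0 (nbit j' k) + g k 1 (nbit j k) * g k 1 (nbit j' k))"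
    by (rule sum_prod_bits)
  also have "\<dots> = (\<Prod>k<m. if nbit j k = nbit j' k then 2 else 0)"
    apply (rule prod.cong[OF refl])
    unfolding g_def using p by (intro bit_orth nbit_01) auto
  also have "\<dots> = (if j = j' then 2^m else 0)"
  proof (cases "j = j'")
    case True then show ?thesis by simp
  next
    case False
    then obtain k where "k < m" "nbit j k \<noteq> nbit j' k" using nbit_inj[OF j] by blast
    then show ?thesis using False by (intro trans[OF prod_zero]) auto
  qed
  finally show ?thesis .
qed

theorem theorem1:
  fixes m :: nat and p0 :: "nat \<Rightarrow> real" and x :: "nat \<Rightarrow> real ^ 'n"
  assumes "m \<ge> 1"
    and "\<And>k. k < m \<Longrightarrow> 0 < p0 k \<and> p0 k < 1"
  shows "\<forall>j < 2 ^ m. x j =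
     (1 / (real (2 ^ m) * sqrt (Psym m p0 j))) *\<^sub>R
       (\<Sum>i<2 ^ m. gamma m p0 i j *\<^sub>R xring m p0 x i)"
proof (intro allI impI)
  fix j :: nat assume j: "j < 2^m"
  have Ppos: "0 < Psym m p0 j" unfolding Psym_def PC_def
    using assms(2) by (intro prod_pos) auto
  have "(\<Sum>i<2 ^ m. gamma m p0 i j *\<^sub>R xring m p0 x i)
      = (\<Sum>i<2 ^ m. \<Sum>j'<2^m. (gamma m p0 i j * (gamma m p0 i j' * sqrt (Psym m p0 j'))) *\<^sub>R x j')"
    unfolding xring_def by (simp add: scaleR_sum_right)
  also have "\<dots> = (\<Sum>j'<2^m. (sqrt (Psym m p0 j') * (\<Sum>i<2 ^ m. gamma m p0 i j * gamma m p0 i j')) *\<^sub>R x j')"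
    by (subst sum.swap) (simp add: scaleR_sum_left sum_distrib_left algebra_simps)
  also have "\<dots> = (\<Sum>j'<2^m. (if j' = j then sqrt (Psym m p0 j) * 2^m else 0) *\<^sub>R x j')"
    by (rule sum.cong[OF refl]) (auto simp: orth[OF assms(2) j])
  also have "\<dots> = (sqrt (Psym m p0 j) * 2^m) *\<^sub>R x j"
    using j by (simp add: if_distrib[of "\<lambda>c. c *\<^sub>R x _"] cong: if_cong)
  finally show "x j = (1 / (real (2 ^ m) * sqrt (Psym m p0 j))) *\<^sub>R
       (\<Sum>i<2 ^ m. gamma m p0 i j *\<^sub>R xring m p0 x i)"
    using Ppos by simp
qed

end
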